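(* Assume the processes $\sigma_n$ satisfy hypotheses (12) and (13) below. Fix a finite $T>0$ and a point $b\in\mathbb R^d$ with $b>0$. Then with probability one there exist a random $N<\infty$ and a random point $a\in\mathbb R^d$ such that $$\sigma_n(nx,nt)=\sup_{y\in[a,x]}\{\sigma_n(ny,0)+\mathbf H((ny,0),(nx,nt))\}$$ for all $x\in[-b,b]$, $t\in(0,T]$ and $n\ge N$.
   Context: Order: for $x,y\in\mathbb R^\nu$, $x\le y$ iff $x_i\le y_i$ for all $i$, $x<y$ iff $x_i<y_i$ for all $i$; $[a,x]=\{y:a\le y\le x\}$; $|x|_\infty=\max_i|x_i|$; $d\ge2$. $\mathbb Z^*=\mathbb Z\cup\{\pm\infty\}$. The state space $\Sigma$ is the set of functions $\sigma:\mathbb R^d\to\mathbb Z^*$ such that (i) $x\le y$ implies $\sigma(x)\le\sigma(y)$; (ii) for every cube $[-q\mathbf 1,q\mathbf 1]$ there are finite partitions $-q=s_i^0<\dots<s_i^{m_i}=q$ of each coordinate axis such that $\sigma$ is constant on each rectangle $\prod_i[s_i^{k_i},s_i^{k_i+1})$; (iii) for every $b\in\mathbb R^d$, $\lim_{M\to\infty}\sup\{|y|_\infty^{-d/(d+1)}\sigma(y):y\le b,|y|_\infty\ge M\}=-\infty$. A rate-one Poisson point process on $\mathbb R^d\times(0,\infty)$ is given; $\mathbf H((y,0),(x,t))$ is the maximal number of Poisson points on a strictly increasing chain (coordinatewise order in $\mathbb R^{d+1}$) in $\{(\eta,s):y<\eta\le x,0<s\le t\}$. Random initial states $\sigma_n(\cdot,0)\in\Sigma$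 are given on the same probability space, and $\sigma_n(x,t)=\sup_{y\le x}\{\sigma_n(y,0)+\mathbf H((y,0),(x,t))\}$ for $t>0$. Hypotheses: $u_0:\mathbb R^d\to\mathbb R$ is nondecreasing, locally Lipschitz, with $\lim_{M\to\infty}\sup\{|y|_\infty^{-d/(d+1)}u_0(y):y\le b',|y|_\infty\ge M\}=-\infty$ for every $b'$; (12) for every $y$, $n^{-1}\sigma_n(ny,0)\to u_0(y)$ a.s.; (13) for every $b'\in\mathbb R^d$ and $C>0$, a.s. there exist finite random $M,N>0$ such that $n\ge N$, $y\le b'$, $|y|_\infty\ge M$ imply $\sigma_n(ny,0)\le -Cn|y|_\infty^{d/(d+1)}$. *)

theory Defs
  imports "HOL-Analysis.Analysis" "HOL-Probability.Probability"
begin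

definition vless :: "real^'d \<Rightarrow> real^'d \<Rightarrow> bool" where
  "vless x y \<longleftrightarrow> (\<forall>i. x $ i < y $ i)"

definition supnorm :: "real^'d \<Rightarrow> real" where
  "supnorm x = Max (range (\<lambda>i. \<bar>x $ i\<bar>))"

definition poisson_pp :: "'w measure \<Rightarrow> ('w \<Rightarrow> ((real^'d) \<times> real) set) \<Rightarrow> bool" where
  "poisson_pp M P \<longleftrightarrow>
     (\<forall>\<omega>\<in>space M. P \<omega> \<subseteq> UNIV \<times> {0<..} \<and> (\<forall>A. bounded A \<longrightarrow> finite (P \<omega> \<inter> A))) \<and>
     (\<forall>A. A \<in> sets lborel \<and> bounded A \<and> A \<subseteq> UNIV \<times> {0<..} \<longrightarrow>
        (\<lambda>\<omega>. card (P \<omega> \<inter> A)) \<in> measurable M (count_space UNIV) \<and>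
        (\<forall>k::nat. measure M {\<omega>\<in>space M. card (P \<omega> \<inter> A) = k}
            = measure lborel A ^ k / fact k * exp (- measure lborel A))) \<and>
     (\<forall>(I::nat set) A. finite I \<and> disjoint_family_on A I \<and>
        (\<forall>i\<in>I. A i \<in> sets lborel \<and> bounded (A i) \<and> A i \<subseteq> UNIV \<times> {0<..}) \<longrightarrow>
        prob_space.indep_vars M (\<lambda>_. count_space UNIV) (\<lambda>i \<omega>. card (P \<omega> \<inter> A i)) I)"

definition strict_chain :: "((real^'d) \<times> real) set \<Rightarrow> bool" where
  "strict_chain C \<longleftrightarrow> (\<forall>p\<in>C. \<forall>q\<in>C. p \<noteq> q \<longrightarrow>
      (vless (fst p) (fst q) \<and> snd p < snd q) \<or> (vless (fst q) (fst p) \<and> snd q < snd p))"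

text \<open>H((y,0),(x,t)): maximal number of points of P on a strictly increasing chain in
  {(\<eta>,s): y < \<eta> \<le> x, 0 < s \<le> t}.\<close>
definition lpp_H :: "((real^'d) \<times> real) set \<Rightarrow> real^'d \<Rightarrow> real^'d \<Rightarrow> real \<Rightarrow> ereal" where
  "lpp_H P y x t = (SUP C \<in> {C. finite C \<and> strict_chain C \<and>
        C \<subseteq> P \<inter> {(\<eta>, s). vless y \<eta> \<and> \<eta> \<le> x \<and> 0 < s \<and> s \<le> t}}.
        ereal (real (card C)))"

definition lpp_evolve :: "((real^'d) \<times> real) set \<Rightarrow> (real^'d \<Rightarrow> ereal) \<Rightarrow> real^'d \<Rightarrow> real \<Rightarrow> ereal" where
  "lpp_evolve P \<sigma>0 x t = (SUP y \<in> {y. y \<le> x}. \<sigma>0 y + lpp_H P y x t)"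

definition state_space :: "(real^'d \<Rightarrow> ereal) set" where
  "state_space = {\<sigma>.
     (\<forall>x. \<sigma> x \<in> range (\<lambda>k::int. ereal (real_of_int k)) \<union> {\<infinity>, -\<infinity>}) \<and>
     mono \<sigma> \<and>
     (\<forall>q>0. \<exists>S :: 'd \<Rightarrow> real set. (\<forall>i. finite (S i) \<and> S i \<subseteq> {-q..q} \<and> -q \<in> S i \<and> q \<in> S i) \<and>
        (\<forall>x y. (\<forall>i. -q \<le> x $ i \<and> x $ i < q \<and> -q \<le> y $ i \<and> y $ i < q \<and>
                    (\<forall>s\<in>S i. s \<le> x $ i \<longleftrightarrow> s \<le> y $ i)) \<longrightarrow> \<sigma> x = \<sigma> y)) \<and>
     (\<forall>b. ((\<lambda>M::real. SUP y \<in> {y. y \<le> b \<and> supnorm y \<ge> M}.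
              ereal (supnorm y powr (- real CARD('d) / (real CARD('d) + 1))) * \<sigma> y)
           \<longlongrightarrow> -\<infinity>) at_top)}"

definition locally_lipschitz :: "(real^'d \<Rightarrow> real) \<Rightarrow> bool" where
  "locally_lipschitz u \<longleftrightarrow> (\<forall>x. \<exists>r>0. \<exists>L. \<forall>y\<in>ball x r. \<forall>z\<in>ball x r. \<bar>u y - u z\<bar> \<le> L * dist y z)"

end

theory Submission
  imports Defs
begin


definition seg :: "'a list \<Rightarrow> ('a \<Rightarrow> nat) \<Rightarrow> ('a \<Rightarrow> nat) \<Rightarrow> 'a list" where
  "seg ls a b = concat (map (\<lambda>i. replicate (b i - a i) i) ls)"

lemma count_replicate: "count_list (replicate n i) x = (if i = x then n else 0)"
  by (induction n) auto

lemma count_concat: "count_list (concat xss) x = sum_list (map (\<lambda>xs. count_list xs x) xss)"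
  by (induction xss) auto

lemma count_seg:
  assumes "distinct ls" "x \<in> set ls"
  shows "count_list (seg ls a b) x = b x - a x"
proof -
  have "count_list (seg ls a b) x = sum_list (map (\<lambda>i. if i = x then b i - a i else 0) ls)"
    unfolding seg_def count_concat by (simp add: o_def count_replicate)
  also have "\<dots> = (\<Sum>i\<in>set ls. if i = x then b i - a i else 0)"
    using assms(1) by (simp add: sum_list_distinct_conv_sum_set)
  also have "\<dots> = b x - a x" using assms(2) by (simp add: sum.delta)
  finally show ?thesis .
qed

fun walk :: "'a list \<Rightarrow> ('a \<Rightarrow> nat) \<Rightarrow> ('a \<Rightarrow> nat) list \<Rightarrow> ('a \<Rightarrow> nat) \<Rightarrow> 'a list" where
  "walk ls a [] tp = seg ls a tp"
| "walk ls a (c # cs) tp = seg ls a c @ walk ls c cs tp"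

lemma walk_props:
  fixes ls :: "'a list"
  assumes "distinct ls" "set ls = UNIV"
  shows "a \<le> tp \<Longrightarrow> sorted_wrt (\<le>) (a # cs) \<Longrightarrow> (\<forall>c\<in>set cs. c \<le> tp) \<Longrightarrow>
    (\<forall>x. count_list (walk ls a cs tp) x = tp x - a x) \<and>
    (\<forall>c\<in>set cs. \<exists>k \<le> length (walk ls a cs tp). (\<lambda>x. count_list (take k (walk ls a cs tp)) x + a x) = c)"
proof (induction cs arbitrary: a)
  case Nil
  then show ?case using assms by (simp add: count_seg)
next
  case (Cons c cs)
  have ac: "a \<le> c" using Cons.prems(2) by simp
  have IH: "(\<forall>x. count_list (walk ls c cs tp) x = tp x - c x) \<and>
    (\<forall>c'\<in>set cs. \<exists>k \<le> length (walk ls c cs tp). (\<lambda>x. count_list (take k (walk ls c cs tp)) x + c x) = c')"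
    using Cons.prems by (intro Cons.IH) auto
  have cs: "count_list (seg ls a c) x = c x - a x" for x using assms count_seg by fastforce
  have ac': "a x \<le> c x" "c x \<le> tp x" for x using ac Cons.prems(3) by (auto simp: le_fun_def)
  show ?case
  proof (intro conjI ballI allI)
    fix x show "count_list (walk ls a (c # cs) tp) x = tp x - a x"
      using IH cs ac'[of x] by simp
  next
    fix c' assume "c' \<in> set (c # cs)"
    then consider "c' = c" | "c' \<in> set cs" by auto
    then show "\<exists>k \<le> length (walk ls a (c # cs) tp). (\<lambda>x. count_list (take k (walk ls a (c # cs) tp)) x + a x) = c'"
    proof cases
      case 1
      show ?thesis
        by (rule exI[of _ "length (seg ls a c)"]) (use cs ac' 1 in auto)
    next
      case 2
      then obtain k where k: "k \<le> length (walk ls c cs tp)"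
        "(\<lambda>x. count_list (take k (walk ls c cs tp)) x + c x) = c'" using IH by blast
      show ?thesis
      proof (rule exI[of _ "length (seg ls a c) + k"], intro conjI)
        show "length (seg ls a c) + k \<le> length (walk ls a (c # cs) tp)" using k by simp
        show "(\<lambda>x. count_list (take (length (seg ls a c) + k) (walk ls a (c # cs) tp)) x + a x) = c'"
        proof
          fix x
          have "count_list (take (length (seg ls a c) + k) (walk ls a (c # cs) tp)) x
              = (c x - a x) + count_list (take k (walk ls c cs tp)) x" using cs by simp
          then show "count_list (take (length (seg ls a c) + k) (walk ls a (c # cs) tp)) x + a x = c' x"
            using k(2) ac'[of x] by (simp add: fun_eq_iff) (metis add.commute)
        qed
      qed
    qed
  qed
qed

lemma chain_list:
  fixes S :: "('a::order) set"
  shows "finite S \<Longrightarrow> (\<forall>a\<in>S. \<forall>b\<in>S. a \<le> b \<or> b \<le> a) \<Longrightarrow> \<exists>cs. set cs = S \<and> sorted_wrt (\<le>) cs"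
proof (induction "card S" arbitrary: S)
  case 0
  then show ?case by (intro exI[of _ "[]"]) auto
next
  case (Suc k)
  then have "S \<noteq> {}" by auto
  then obtain m where m: "m \<in> S" "\<forall>b\<in>S. m \<le> b \<longrightarrow> b = m"
    using finite_has_maximal[OF Suc.prems(1)] by metis
  have le: "b \<le> m" if "b \<in> S" for b using Suc.prems(2) m that by metis
  obtain cs where cs: "set cs = S - {m}" "sorted_wrt (\<le>) cs"
  proof -
    have "k = card (S - {m})" using Suc.hyps(2) m(1) Suc.prems(1) by simp
    then show ?thesis using Suc.hyps(1)[of "S - {m}"] Suc.prems that by auto
  qed
  show ?case
    by (rule exI[of _ "cs @ [m]"]) (use cs m le in \<open>auto simp: sorted_wrt_append\<close>)
qed



definition cellset :: "real^'d \<Rightarrow> real \<Rightarrow> real \<Rightarrow> ('d option \<Rightarrow> nat) \<Rightarrow> ((real^'d) \<times> real) set" where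
  "cellset lo h \<tau> c = cbox ((\<chi> i. lo$i + real (c (Some i)) * h), real (c None) * \<tau>)
       ((\<chi> i. lo$i + (real (c (Some i)) + 1) * h), (real (c None) + 1) * \<tau>) \<inter> {p. real (c None) * \<tau> < snd p}"

definition Qbox :: "real^'d \<Rightarrow> real \<Rightarrow> real \<Rightarrow> nat \<Rightarrow> ((real^'d) \<times> real) set" where
  "Qbox lo h \<tau> r = {p. (\<forall>i. lo$i < fst p$i \<and> fst p$i \<le> lo$i + real r * h) \<and> 0 < snd p \<and> snd p \<le> real r * \<tau>}"

definition ix :: "real \<Rightarrow> real \<Rightarrow> nat" where "ix h x = nat (\<lceil>x / h\<rceil> - 1)"

definition idx :: "real^'d \<Rightarrow> real \<Rightarrow> real \<Rightarrow> (real^'d) \<times> real \<Rightarrow> 'd option \<Rightarrow> nat" where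
  "idx lo h \<tau> p = case_option (ix \<tau> (snd p)) (\<lambda>i. ix h (fst p$i - lo$i))"

lemma ix_props:
  assumes "h > 0" "0 < x" "x \<le> real r * h"
  shows "real (ix h x) * h < x" "x \<le> (real (ix h x) + 1) * h" "ix h x \<le> r - 1"
proof -
  define v where "v = x / h"
  have v: "0 < v" "v \<le> real r" using assms by (simp_all add: v_def pos_divide_le_eq)
  have c0: "\<lceil>v\<rceil> \<ge> 1" using v zero_less_ceiling[of v] by linarith
  have e: "real (ix h x) = real_of_int \<lceil>v\<rceil> - 1" using c0 by (simp add: ix_def v_def)
  have a: "real_of_int \<lceil>v\<rceil> - 1 < v" "v \<le> real_of_int \<lceil>v\<rceil>" by (auto simp: ceiling_correct)
  have b: "\<lceil>v\<rceil> \<le> int r" using v by (simp add: ceiling_le_iff)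
  have xv: "x = v * h" using assms by (simp add: v_def)
  show "real (ix h x) * h < x" using a e xv assms(1) by simp
  show "x \<le> (real (ix h x) + 1) * h" using a e xv assms(1) by (simp add: mult_right_mono)
  show "ix h x \<le> r - 1" using b c0 by (simp add: ix_def v_def)
qed

lemma ix_mono: "h > 0 \<Longrightarrow> x \<le> y \<Longrightarrow> ix h x \<le> ix h y"
  unfolding ix_def by (intro nat_mono diff_right_mono ceiling_mono divide_right_mono) auto

lemma idx_cell:
  fixes lo :: "real^'d"
  assumes "h > 0" "\<tau> > 0" "p \<in> Qbox lo h \<tau> r"
  shows "p \<in> cellset lo h \<tau> (idx lo h \<tau> p)" "idx lo h \<tau> p \<le> (\<lambda>_. r - 1)"
proof -
  obtain \<eta> s where p: "p = (\<eta>, s)" by force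
  have q: "0 < \<eta>$i - lo$i" "\<eta>$i - lo$i \<le> real r * h" for i
  proof -
    have "lo$i < \<eta>$i \<and> \<eta>$i \<le> lo$i + real r * h" using assms(3) by (auto simp: Qbox_def p)
    then show "0 < \<eta>$i - lo$i" "\<eta>$i - lo$i \<le> real r * h" by linarith+
  qed
  have qs: "0 < s" "s \<le> real r * \<tau>" using assms(3) by (auto simp: Qbox_def p)
  note I = ix_props[OF assms(1) q] and J = ix_props[OF assms(2) qs]
  have I1: "lo$i + real (ix h (\<eta>$i - lo$i)) * h \<le> \<eta>$i" for i using I(1)[of i] by linarith
  show "p \<in> cellset lo h \<tau> (idx lo h \<tau> p)"
    unfolding cellset_def p idx_def using I I1 J
    by (auto simp: interval_cbox_cart[symmetric] less_eq_vec_def algebra_simps)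
  show "idx lo h \<tau> p \<le> (\<lambda>_. r - 1)"
    unfolding le_fun_def idx_def p using I(3) J(3) by (auto split: option.split)
qed

lemma idx_mono:
  assumes "h > 0" "\<tau> > 0" "vless (fst p) (fst q)" "snd p < snd q"
  shows "idx lo h \<tau> p \<le> idx lo h \<tau> q"
  unfolding le_fun_def idx_def using assms
  by (auto split: option.split intro!: ix_mono simp: vless_def less_imp_le)

lemma cover:
  fixes C :: "((real^'d) \<times> real) set" and lo :: "real^'d"
  assumes "h > 0" "\<tau> > 0" "finite C" "strict_chain C" "C \<subseteq> Qbox lo h \<tau> r"
  shows "\<exists>w. w \<in> {w. set w \<subseteq> UNIV \<and> length w = CARD('d option) * (r - 1)} \<and>
     C \<subseteq> (\<Union>k\<in>{..length w}. cellset lo h \<tau> (count_list (take k w)))"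
proof -
  define S where "S = idx lo h \<tau> ` C"
  have "finite S" using assms(3) by (simp add: S_def)
  moreover have "\<forall>a\<in>S. \<forall>b\<in>S. a \<le> b \<or> b \<le> a"
  proof (intro ballI)
    fix a b assume "a \<in> S" "b \<in> S"
    then obtain p q where pq: "p \<in> C" "q \<in> C" "a = idx lo h \<tau> p" "b = idx lo h \<tau> q"
      by (auto simp: S_def)
    show "a \<le> b \<or> b \<le> a"
    proof (cases "p = q")
      case True then show ?thesis using pq by simp
    next
      case False
      then show ?thesis using assms(4) pq idx_mono[OF assms(1,2)] unfolding strict_chain_def by metis
    qed
  qed
  ultimately obtain cs where cs: "set cs = S" "sorted_wrt (\<le>) cs" using chain_list by blast
  obtain ls :: "'d option list" where ls: "set ls = UNIV" "distinct ls"
    using finite_distinct_list[of "UNIV :: 'd option set"] by auto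
  define tp :: "'d option \<Rightarrow> nat" where "tp = (\<lambda>_. r - 1)"
  have csle: "\<forall>c\<in>set cs. c \<le> tp"
  proof
    fix c assume "c \<in> set cs"
    then obtain p where "p \<in> C" "c = idx lo h \<tau> p" using cs(1) by (auto simp: S_def)
    then show "c \<le> tp" using idx_cell(2)[OF assms(1,2), of p lo r] assms(5) by (auto simp: tp_def)
  qed
  have "sorted_wrt (\<le>) ((\<lambda>_. 0 :: nat) # cs)" using cs(2) by (simp add: le_fun_def)
  from walk_props[OF ls(2,1), of "\<lambda>_. 0" tp cs, OF _ this csle]
  have W: "\<forall>x. count_list (walk ls (\<lambda>_. 0) cs tp) x = tp x - 0"
     "\<forall>c\<in>set cs. \<exists>k \<le> length (walk ls (\<lambda>_. 0) cs tp). (\<lambda>x. count_list (take k (walk ls (\<lambda>_. 0) cs tp)) x + 0) = c"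
    by (auto simp: le_fun_def)
  define w where "w = walk ls (\<lambda>_. 0) cs tp"
  have len: "length w = CARD('d option) * (r - 1)"
  proof -
    have "length w = sum (count_list w) UNIV" by (simp add: sum_count_set)
    also have "\<dots> = sum (\<lambda>_. r - 1) (UNIV :: 'd option set)" using W(1) by (simp add: w_def tp_def)
    finally show ?thesis by simp
  qed
  have "C \<subseteq> (\<Union>k\<in>{..length w}. cellset lo h \<tau> (count_list (take k w)))"
  proof
    fix p assume p: "p \<in> C"
    then have "idx lo h \<tau> p \<in> set cs" using cs(1) by (auto simp: S_def)
    then obtain k where k: "k \<le> length w" "(\<lambda>x. count_list (take k w) x) = idx lo h \<tau> p"
      using W(2) unfolding w_def by fastforce
    have "p \<in> cellset lo h \<tau> (count_list (take k w))"
    proof -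
      have "p \<in> Qbox lo h \<tau> r" using p assms(5) by auto
      from idx_cell(1)[OF assms(1,2) this] show ?thesis using k(2) by simp
    qed
    then show "p \<in> (\<Union>k\<in>{..length w}. cellset lo h \<tau> (count_list (take k w)))" using k(1) by auto
  qed
  then show ?thesis using len by (intro exI[of _ w]) simp
qed



lemma poisson_tail:
  assumes M: "prob_space M" and P: "poisson_pp M P"
    and A: "A \<in> sets lborel" "bounded A" "A \<subseteq> UNIV \<times> {0<..}"
  shows "{\<omega>\<in>space M. m \<le> card (P \<omega> \<inter> A)} \<in> sets M"
    "measure M {\<omega>\<in>space M. m \<le> card (P \<omega> \<inter> A)} \<le> measure lborel A ^ m / fact m"
proof -
  interpret prob_space M by (rule M)
  define f where "f = (\<lambda>\<omega>. card (P \<omega> \<inter> A))"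
  define l where "l = measure lborel A"
  have fm: "f \<in> measurable M (count_space UNIV)" and
    dist: "\<And>k. measure M {\<omega>\<in>space M. f \<omega> = k} = l ^ k / fact k * exp (- l)"
    using P A unfolding poisson_pp_def f_def l_def by blast+
  have Ek: "{\<omega>\<in>space M. f \<omega> = k} \<in> sets M" for k
  proof -
    have "f -` {k} \<inter> space M \<in> sets M" by (rule measurable_sets[OF fm]) simp
    moreover have "f -` {k} \<inter> space M = {\<omega>\<in>space M. f \<omega> = k}" by auto
    ultimately show ?thesis by simp
  qed
  define U where "U = (\<Union>k\<in>{..<m}. {\<omega>\<in>space M. f \<omega> = k})"
  have U: "U \<in> sets M" unfolding U_def using Ek by auto
  have eq: "{\<omega>\<in>space M. m \<le> card (P \<omega> \<inter> A)} = space M - U"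
    by (auto simp: U_def f_def)
  show "{\<omega>\<in>space M. m \<le> card (P \<omega> \<inter> A)} \<in> sets M" using eq U by auto
  have "measure M U = (\<Sum>k<m. measure M {\<omega>\<in>space M. f \<omega> = k})"
    unfolding U_def by (rule finite_measure_finite_Union) (use Ek in \<open>auto simp: disjoint_family_on_def\<close>)
  also have "\<dots> = (\<Sum>k<m. l ^ k / fact k) * exp (- l)" using dist by (simp add: sum_distrib_right)
  finally have mU: "measure M U = (\<Sum>k<m. l ^ k / fact k) * exp (- l)" .
  obtain t where t: "\<bar>t\<bar> \<le> \<bar>l\<bar>" "exp l = (\<Sum>k<m. l ^ k / fact k) + exp t / fact m * l ^ m"
    using Maclaurin_exp_le[of l m] by blast
  have l0: "l \<ge> 0" by (simp add: l_def)
  have "measure M {\<omega>\<in>space M. m \<le> card (P \<omega> \<inter> A)} = 1 - measure M U"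
    using eq prob_compl[OF U] by simp
  also have "\<dots> = (exp l - (\<Sum>k<m. l ^ k / fact k)) * exp (- l)"
    using mU by (simp add: algebra_simps exp_minus_inverse)
  also have "\<dots> = exp t * exp (- l) * (l ^ m / fact m)" using t(2) by simp
  also have "\<dots> \<le> 1 * (l ^ m / fact m)"
  proof (rule mult_right_mono)
    have "exp t \<le> exp l" using t(1) l0 by simp
    then have "exp t * exp (- l) \<le> exp l * exp (- l)" by (simp add: mult_right_mono)
    then show "exp t * exp (- l) \<le> 1" by (simp add: exp_minus_inverse)
  qed (use l0 in simp)
  finally show "measure M {\<omega>\<in>space M. m \<le> card (P \<omega> \<inter> A)} \<le> measure lborel A ^ m / fact m"
    by (simp add: l_def)
qed

definition cellU :: "real^'d \<Rightarrow> real \<Rightarrow> real \<Rightarrow> 'd option list \<Rightarrow> ((real^'d) \<times> real) set" where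
  "cellU lo h \<tau> w = (\<Union>k\<in>{..length w}. cellset lo h \<tau> (count_list (take k w)))"

lemma cellset_props:
  fixes lo :: "real^'d"
  assumes "h > 0" "\<tau> > 0"
  shows "cellset lo h \<tau> c \<in> sets lborel" "bounded (cellset lo h \<tau> c)"
    "cellset lo h \<tau> c \<subseteq> UNIV \<times> {0<..}"
    "measure lborel (cellset lo h \<tau> c) \<le> h ^ CARD('d) * \<tau>"
proof -
  define a :: "real^'d" where "a = (\<chi> i. lo$i + real (c (Some i)) * h)"
  define b :: "real^'d" where "b = (\<chi> i. lo$i + (real (c (Some i)) + 1) * h)"
  define \<alpha> where "\<alpha> = real (c None) * \<tau>"
  define \<beta> where "\<beta> = (real (c None) + 1) * \<tau>"
  have cs: "cellset lo h \<tau> c = cbox (a, \<alpha>) (b, \<beta>) \<inter> (UNIV \<times> {\<alpha><..})"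
    unfolding cellset_def a_def b_def \<alpha>_def \<beta>_def by auto
  have o: "open (UNIV \<times> {\<alpha><..} :: ((real^'d) \<times> real) set)" by (intro open_Times) auto
  show "cellset lo h \<tau> c \<in> sets lborel" unfolding cs
    using o by (intro sets.Int borel_closed borel_open) auto
  show "bounded (cellset lo h \<tau> c)" unfolding cs by (intro bounded_Int) auto
  have "\<alpha> \<ge> 0" using assms by (simp add: \<alpha>_def)
  then show "cellset lo h \<tau> c \<subseteq> UNIV \<times> {0<..}" unfolding cs by auto
  have "measure lborel (cellset lo h \<tau> c) \<le> measure lborel (cbox (a, \<alpha>) (b, \<beta>))"
    by (rule measure_mono_fmeasurable) (use \<open>cellset lo h \<tau> c \<in> sets lborel\<close> cs in auto)
  also have "\<dots> = measure lborel (cbox a b) * measure lborel (cbox \<alpha> \<beta>)" by (rule content_Pair)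
  also have "measure lborel (cbox a b) = (\<Prod>i\<in>UNIV. b$i - a$i)"
    by (rule content_cbox_cart) (use assms in \<open>auto simp: a_def b_def interval_cbox_cart[symmetric] less_eq_vec_def\<close>)
  also have "\<dots> = h ^ CARD('d)" by (simp add: a_def b_def algebra_simps)
  also have "measure lborel (cbox \<alpha> \<beta>) = \<tau>" using assms by (simp add: \<alpha>_def \<beta>_def algebra_simps)
  finally show "measure lborel (cellset lo h \<tau> c) \<le> h ^ CARD('d) * \<tau>" .
qed

lemma cellU_props:
  fixes lo :: "real^'d"
  assumes "h > 0" "\<tau> > 0"
  shows "cellU lo h \<tau> w \<in> sets lborel" "bounded (cellU lo h \<tau> w)"
    "cellU lo h \<tau> w \<subseteq> UNIV \<times> {0<..}"
    "measure lborel (cellU lo h \<tau> w) \<le> real (length w + 1) * (h ^ CARD('d) * \<tau>)"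
proof -
  note cp = cellset_props[OF assms]
  show "cellU lo h \<tau> w \<in> sets lborel" unfolding cellU_def using cp(1) by auto
  show "bounded (cellU lo h \<tau> w)" unfolding cellU_def using cp(2) by auto
  show "cellU lo h \<tau> w \<subseteq> UNIV \<times> {0<..}" unfolding cellU_def using cp(3) by blast
  have "measure lborel (cellU lo h \<tau> w) \<le> (\<Sum>k\<in>{..length w}. measure lborel (cellset lo h \<tau> (count_list (take k w))))"
    unfolding cellU_def by (rule measure_UNION_le) (use cp(1) in auto)
  also have "\<dots> \<le> (\<Sum>k\<in>{..length w}. h ^ CARD('d) * \<tau>)" by (intro sum_mono cp(4))
  finally show "measure lborel (cellU lo h \<tau> w) \<le> real (length w + 1) * (h ^ CARD('d) * \<tau>)" by simp
qed



lemma pow_fact_le_exp: "(x::real) \<ge> 0 \<Longrightarrow> x ^ m / fact m \<le> exp x"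
proof -
  assume x: "x \<ge> 0"
  obtain t where t: "exp x = (\<Sum>k<Suc m. x ^ k / fact k) + exp t / fact (Suc m) * x ^ Suc m"
    using Maclaurin_exp_le[of x "Suc m"] by blast
  have "x ^ m / fact m \<le> (\<Sum>k<Suc m. x ^ k / fact k)"
    by (rule member_le_sum) (use x in auto)
  moreover have "0 \<le> exp t / fact (Suc m) * x ^ Suc m" using x by simp
  ultimately show ?thesis using t by linarith
qed

lemma numeric:
  fixes D r m :: nat and \<mu> c1 L :: real
  assumes mu: "\<mu> \<ge> 0" "\<mu> \<le> c1 * r" and c1: "c1 > 0"
    and L: "L = 2 * exp 1 * c1 * real ((D+1)^(D+1)) + 1" and m: "real m \<ge> L * r" and r: "r \<ge> 1"
  shows "real ((D+1)^((D+1)*(r-1))) * (\<mu>^m / fact m) \<le> (1/2)^r"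
proof -
  define q where "q = exp 1 * c1 / L"
  define Dp :: real where "Dp = real ((D+1)^(D+1))"
  have "(1::nat) \<le> (D+1)^(D+1)" by (rule one_le_power) simp
  then have Dp1: "Dp \<ge> 1" unfolding Dp_def by (metis of_nat_1 of_nat_le_iff)
  have L': "L = 2 * exp 1 * c1 * Dp + 1" using L by (simp only: Dp_def)
  have "0 \<le> 2 * exp 1 * c1 * Dp" using c1 Dp1 by simp
  then have L1: "L \<ge> 1" and Lpos: "L > 0" using L' by linarith+
  have mpos: "real m > 0" using m L1 r
    by (smt (verit, ccfv_SIG) mult_le_cancel_left1 of_nat_1 of_nat_le_iff)
  have mr: "m \<ge> r" using m L1 r
    by (smt (verit, ccfv_SIG) mult_le_cancel_right1 of_nat_0_le_iff of_nat_le_iff)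
  have q0: "q \<ge> 0" using c1 Lpos by (simp add: q_def)
  have qD: "Dp * q \<le> 1/2"
  proof -
    have "Dp * q = (exp 1 * c1 * Dp) / L" by (simp add: q_def Dp_def)
    also have "\<dots> \<le> 1/2"
    proof -
      have "exp 1 * c1 * Dp \<le> 1/2 * L" using L' by (simp add: algebra_simps)
      then show ?thesis using Lpos by (simp add: pos_divide_le_eq)
    qed
    finally show ?thesis .
  qed
  have "1 * q \<le> Dp * q" by (rule mult_right_mono[OF Dp1 q0])
  then have q1: "q \<le> 1" using qD by linarith
  have "\<mu>^m / fact m = (\<mu> / m)^m * (real m ^ m / fact m)" using mpos
    by (simp add: power_divide)
  also have "\<dots> \<le> (\<mu> / m)^m * exp (real m)"
    by (rule mult_left_mono[OF pow_fact_le_exp]) (use mu in auto)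
  also have "\<dots> = (exp 1 * \<mu> / m)^m"
  proof -
    have "exp (real m) = exp 1 ^ m" using exp_of_nat_mult[of m 1] by simp
    moreover have "exp 1 * \<mu> / m = exp 1 * (\<mu> / m)" by simp
    ultimately show ?thesis by (simp only: power_mult_distrib mult.commute)
  qed
  also have "\<dots> \<le> q ^ m"
  proof (rule power_mono)
    have "exp 1 * \<mu> / m \<le> exp 1 * (c1 * r) / (L * r)"
      by (rule frac_le) (use mu m r Lpos c1 in \<open>auto intro!: mult_pos_pos\<close>)
    also have "\<dots> = q" using r by (simp add: q_def)
    finally show "exp 1 * \<mu> / m \<le> q" .
  qed (use mu in auto)
  also have "\<dots> \<le> q ^ r" by (rule power_decreasing) (use mr q0 q1 in auto)
  finally have A: "\<mu>^m / fact m \<le> q ^ r" .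
  have B: "real ((D+1)^((D+1)*(r-1))) \<le> Dp ^ r"
  proof -
    have "real ((D+1)^((D+1)*(r-1))) = real (D+1) ^ ((D+1)*(r-1))" by simp
    also have "\<dots> \<le> real (D+1) ^ ((D+1)*r)" by (rule power_increasing[OF mult_le_mono2]) auto
    also have "\<dots> = Dp ^ r" by (simp only: Dp_def of_nat_power power_mult)
    finally show ?thesis .
  qed
  have "real ((D+1)^((D+1)*(r-1))) * (\<mu>^m / fact m) \<le> Dp ^ r * q ^ r"
    by (rule mult_mono[OF B A]) (use Dp1 mu in auto)
  also have "\<dots> = (Dp * q) ^ r" by (simp add: power_mult_distrib)
  also have "\<dots> \<le> (1/2) ^ r" by (rule power_mono[OF qD]) (use Dp1 q0 in auto)
  finally show ?thesis .
qed



lemma Kpow: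
  fixes \<theta> :: real assumes "\<theta> \<ge> 1/2"
  shows "((4::real)^j) powr \<theta> \<ge> 2^j" "((4::real)^j) powr \<theta> \<ge> real j + 1"
proof -
  have "(4::real)^j \<ge> 1" by simp
  then have "((4::real)^j) powr (1/2) \<le> ((4::real)^j) powr \<theta>" by (rule powr_mono[OF assms])
  moreover have "((4::real)^j) powr (1/2) = 2^j"
  proof -
    have "(4::real)^j = (2^j)^2" by (metis power_mult power_mult_distrib[symmetric] mult.commute num_double numeral_times_numeral power2_eq_square)
    then show ?thesis by (simp add: powr_half_sqrt)
  qed
  ultimately show "((4::real)^j) powr \<theta> \<ge> 2^j" by simp
  moreover have "real j + 1 \<le> 2^j"
  proof (induction j)
    case (Suc j)
    have "(1::real) \<le> 2^j" by simp
    then show ?case using Suc by simp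
  qed simp
  ultimately show "((4::real)^j) powr \<theta> \<ge> real j + 1" by linarith
qed

lemma mu_bound:
  fixes D r :: nat and n K \<theta> T h \<tau> :: real
  assumes r: "r \<ge> 1" and n: "n \<ge> 0" and K: "K \<ge> 1" and T: "T > 0"
    and th: "\<theta> * (real D + 1) = real D" and rn: "real r \<ge> n * K powr \<theta>"
    and h: "h = 2 * n * K / r" and tau: "\<tau> = n * T / r"
  shows "real (Suc D * (r - 1) + 1) * (h ^ D * \<tau>) \<le> real (D+1) * 2^D * T * real r"
proof -
  have rpos: "real r > 0" using r by simp
  have a: "real (Suc D * (r - 1) + 1) \<le> real (D+1) * real r"
  proof -
    have "Suc D * (r - 1) + 1 \<le> (D+1) * r" using r by (cases r) auto
    then show ?thesis by (metis of_nat_le_iff of_nat_mult)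
  qed
  have hD: "h ^ D * \<tau> = 2^D * T * (n^(D+1) * K^D) / real r ^ (D+1)"
    by (simp add: h tau power_divide power_mult_distrib field_simps)
  have key: "n^(D+1) * K^D \<le> real r ^ (D+1)"
  proof -
    have "(K powr \<theta>) ^ (D+1) = K ^ D"
    proof -
      have "(K powr \<theta>) ^ (D+1) = (K powr \<theta>) powr real (D+1)"
        by (rule powr_realpow[symmetric]) (use K in simp)
      also have "\<dots> = K powr (\<theta> * real (D+1))" by (simp add: powr_powr)
      also have "\<dots> = K powr real D" using th by (simp add: add.commute)
      also have "\<dots> = K ^ D" by (rule powr_realpow) (use K in simp)
      finally show ?thesis .
    qed
    then have "n^(D+1) * K^D = (n * K powr \<theta>) ^ (D+1)" by (simp add: power_mult_distrib)
    also have "\<dots> \<le> real r ^ (D+1)" by (rule power_mono[OF rn]) (use n K in simp)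
    finally show ?thesis .
  qed
  have hD0: "0 \<le> h ^ D * \<tau>" using n K T rpos by (simp add: h tau)
  have "real (Suc D * (r - 1) + 1) * (h ^ D * \<tau>) \<le> real (D+1) * real r * (h ^ D * \<tau>)"
    by (rule mult_right_mono[OF a hD0])
  also have "h ^ D * \<tau> \<le> 2^D * T * (real r ^ (D+1)) / real r ^ (D+1) / real r * real r"
  proof -
    have "h ^ D * \<tau> \<le> 2^D * T * (real r ^ (D+1)) / real r ^ (D+1)"
      unfolding hD by (intro divide_right_mono mult_left_mono key) (use T in auto)
    then show ?thesis using rpos by simp
  qed
  then have "real (D+1) * real r * (h ^ D * \<tau>) \<le> real (D+1) * real r * (2^D * T * (real r ^ (D+1)) / real r ^ (D+1) / real r * real r)"
    by (rule mult_left_mono) simp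
  also have "\<dots> = real (D+1) * 2^D * T * real r" using rpos by (simp add: field_simps)
  finally show ?thesis by simp
qed



lemma nat_ceiling_bounds: "(x::real) \<ge> 0 \<Longrightarrow> x \<le> real (nat \<lceil>x\<rceil>) \<and> real (nat \<lceil>x\<rceil>) \<le> x + 1"
proof -
  assume x: "x \<ge> 0"
  then have "real (nat \<lceil>x\<rceil>) = real_of_int \<lceil>x\<rceil>" by simp
  moreover have "x \<le> real_of_int \<lceil>x\<rceil>" "real_of_int \<lceil>x\<rceil> \<le> x + 1" by (simp_all add: le_of_int_ceiling of_int_ceiling_le_add_one)
  ultimately show ?thesis by simp
qed

lemma lt_nat_ceiling: "k < nat \<lceil>y\<rceil> \<Longrightarrow> real k < (y::real)"
proof -
  assume k: "k < nat \<lceil>y\<rceil>"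
  have "\<not> \<lceil>y\<rceil> \<le> int k" using k by linarith
  then have "\<not> y \<le> real_of_int (int k)" by (simp add: ceiling_le_iff)
  then show ?thesis by simp
qed

lemma H_AE:
  fixes M :: "'w measure" and P :: "'w \<Rightarrow> ((real^'d) \<times> real) set" and T :: real
  assumes M: "prob_space M" and PP: "poisson_pp M P" and T: "T > 0"
  shows "\<exists>\<Lambda>>0. AE \<omega> in M. \<exists>N\<ge>1. \<forall>n\<ge>N. \<forall>j::nat. \<forall>C. finite C \<and> strict_chain C \<and> C \<subseteq> P \<omega> \<and>
      (\<forall>p\<in>C. (\<forall>i. -(real n * 4^j) < fst p$i \<and> fst p$i \<le> real n * 4^j) \<and> 0 < snd p \<and> snd p \<le> real n * T)
      \<longrightarrow> real (card C) \<le> \<Lambda> * real n * ((4::real)^j) powr (real CARD('d) / (real CARD('d) + 1))"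
proof -
  interpret prob_space M by (rule M)
  define D where "D = CARD('d)"
  define \<theta> where "\<theta> = real D / (real D + 1)"
  have D1: "D \<ge> 1" by (simp add: D_def Suc_leI)
  have th: "\<theta> * (real D + 1) = real D" by (simp add: \<theta>_def)
  have th2: "\<theta> \<ge> 1/2" using D1 by (simp add: \<theta>_def field_simps)
  define c1 where "c1 = real (D+1) * 2^D * T"
  have c1: "c1 > 0" using T by (simp add: c1_def)
  define L where "L = 2 * exp 1 * c1 * real ((D+1)^(D+1)) + 1"
  have "0 \<le> 2 * exp 1 * c1 * real ((D+1)^(D+1))" using c1 by simp
  then have L1: "L \<ge> 1" unfolding L_def by linarith
  define rr where "rr = (\<lambda>n j::nat. nat \<lceil>real n * ((4::real)^j) powr \<theta>\<rceil> + n + j)"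
  define hh where "hh = (\<lambda>n j. 2 * real n * 4^j / real (rr n j))"
  define tt where "tt = (\<lambda>n j. real n * T / real (rr n j))"
  define lov :: "nat \<Rightarrow> nat \<Rightarrow> real^'d" where "lov = (\<lambda>n j. \<chi> i. - (real n * 4^j))"
  define mm where "mm = (\<lambda>n j. nat \<lceil>L * real (rr n j)\<rceil>)"
  define W where "W = (\<lambda>r::nat. {w :: 'd option list. set w \<subseteq> UNIV \<and> length w = CARD('d option) * (r - 1)})"
  define G where "G = (\<lambda>n j w. {\<omega>\<in>space M. mm n j \<le> card (P \<omega> \<inter> cellU (lov n j) (hh n j) (tt n j) w)})"
  define Ev where "Ev = (\<lambda>n j. \<Union>w\<in>W (rr n j). G n j w)"
  have finW: "finite (W r)" for r unfolding W_def by (rule finite_lists_length_eq) simp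
  have cardW: "card (W r) = (D+1)^((D+1)*(r-1))" for r
    unfolding W_def D_def by (subst card_lists_length_eq) simp_all
  have Kth: "((4::real)^j) powr \<theta> \<ge> 2^j" "((4::real)^j) powr \<theta> \<ge> real j + 1" for j
    using Kpow[OF th2] by auto
  have Kth1: "((4::real)^j) powr \<theta> \<ge> 1" for j using Kth(2)[of j] by simp
  have rge: "real (rr n j) \<ge> real n * ((4::real)^j) powr \<theta>" for n j
  proof -
    have "real n * ((4::real)^j) powr \<theta> \<le> real (nat \<lceil>real n * ((4::real)^j) powr \<theta>\<rceil>)"
      using nat_ceiling_bounds[of "real n * ((4::real)^j) powr \<theta>"] by simp
    then show ?thesis unfolding rr_def of_nat_add by linarith
  qed
  have rge2: "rr n j \<ge> n + j" for n j unfolding rr_def by simp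
  have rle: "real (rr n j) \<le> 3 * real n * ((4::real)^j) powr \<theta>" if n: "n \<ge> 1" for n j
  proof -
    define k where "k = ((4::real)^j) powr \<theta>"
    have k: "k \<ge> real j + 1" "k \<ge> 1" using Kth Kth1 by (auto simp: k_def)
    have "real (nat \<lceil>real n * k\<rceil>) \<le> real n * k + 1"
      using nat_ceiling_bounds[of "real n * k"] k by simp
    then have "real (rr n j) \<le> real n * k + 1 + real n + real j"
      unfolding rr_def k_def of_nat_add by linarith
    moreover have "real n * k \<ge> k" "real n * k \<ge> real n" using n k
      by (simp_all add: mult_le_cancel_right1 mult_le_cancel_left1)
    ultimately show ?thesis using k unfolding k_def by linarith
  qed
  have rpos: "rr n j \<ge> 1" if "n \<ge> 1" for n j using rge2[of n j] that by simp
  have hpos: "hh n j > 0" "tt n j > 0" if "n \<ge> 1" for n j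
    using rpos[OF that, of j] that T by (auto simp: hh_def tt_def)
  have Gsets: "G n j w \<in> sets M" and
    Gprob: "prob (G n j w) \<le> measure lborel (cellU (lov n j) (hh n j) (tt n j) w) ^ mm n j / fact (mm n j)"
    if "n \<ge> 1" for n j w
  proof -
    note cp = cellU_props[OF hpos[OF that], where lo="lov n j" and w=w]
    show "G n j w \<in> sets M" unfolding G_def by (rule poisson_tail(1)[OF M PP cp(1-3)])
    show "prob (G n j w) \<le> measure lborel (cellU (lov n j) (hh n j) (tt n j) w) ^ mm n j / fact (mm n j)"
      unfolding G_def by (rule poisson_tail(2)[OF M PP cp(1-3)])
  qed
  have Ev_sets: "Ev n j \<in> sets M" if "n \<ge> 1" for n j
    unfolding Ev_def using Gsets[OF that] finW by (intro sets.finite_UN) auto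
  have Ev_prob: "prob (Ev n j) \<le> (1/2)^(n+j)" if n: "n \<ge> 1" for n j
  proof -
    define r where "r = rr n j"
    define \<mu> where "\<mu> = real (Suc D * (r - 1) + 1) * (hh n j ^ D * tt n j)"
    have r1: "r \<ge> 1" using rpos[OF n] by (simp add: r_def)
    have mu0: "\<mu> \<ge> 0" using hpos[OF n, of j] by (simp add: \<mu>_def)
    have muw: "measure lborel (cellU (lov n j) (hh n j) (tt n j) w) \<le> \<mu>" if "w \<in> W r" for w
    proof -
      have "length w = Suc D * (r - 1)" using that by (simp add: W_def D_def)
      then show ?thesis using cellU_props(4)[OF hpos[OF n], where lo="lov n j" and w=w] by (simp add: \<mu>_def D_def)
    qed
    have "prob (Ev n j) \<le> (\<Sum>w\<in>W r. prob (G n j w))"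
      unfolding Ev_def r_def[symmetric] by (rule finite_measure_subadditive_finite) (use finW Gsets[OF n] in auto)
    also have "\<dots> \<le> (\<Sum>w\<in>W r. \<mu> ^ mm n j / fact (mm n j))"
    proof (rule sum_mono)
      fix w assume w: "w \<in> W r"
      have "prob (G n j w) \<le> measure lborel (cellU (lov n j) (hh n j) (tt n j) w) ^ mm n j / fact (mm n j)"
        by (rule Gprob[OF n])
      also have "\<dots> \<le> \<mu> ^ mm n j / fact (mm n j)"
        by (intro divide_right_mono power_mono muw[OF w]) auto
      finally show "prob (G n j w) \<le> \<mu> ^ mm n j / fact (mm n j)" .
    qed
    also have "\<dots> = real ((D+1)^((D+1)*(r-1))) * (\<mu> ^ mm n j / fact (mm n j))"
      using cardW[of r] by simp
    also have "\<dots> \<le> (1/2)^r"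
    proof (rule numeric[OF mu0 _ c1 L_def])
      show "\<mu> \<le> c1 * real r" unfolding \<mu>_def c1_def
        by (rule mu_bound[OF r1 _ _ T th]) (use rge[of n j] in \<open>auto simp: r_def hh_def tt_def\<close>)
      show "L * real r \<le> real (mm n j)"
        using nat_ceiling_bounds[of "L * real r"] L1 by (simp add: mm_def r_def)
    qed (rule r1)
    also have "\<dots> \<le> (1/2)^(n+j)" by (rule power_decreasing) (use rge2[of n j] in \<open>auto simp: r_def\<close>)
    finally show ?thesis .
  qed
  define F where "F = (\<lambda>n. \<Union>j. Ev (Suc n) j)"
  have F_sets: "F n \<in> sets M" for n
    unfolding F_def using Ev_sets[of "Suc n"] by auto
  have F_prob: "prob (F n) \<le> (1/2)^n" for n
  proof -
    have geo: "summable (\<lambda>j. (1/2::real)^(Suc n + j))"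
      by (simp add: power_add summable_mult)
    have le: "prob (Ev (Suc n) j) \<le> (1/2)^(Suc n + j)" for j using Ev_prob[of "Suc n" j] by simp
    have sE: "summable (\<lambda>j. prob (Ev (Suc n) j))"
      by (rule summable_comparison_test'[OF geo, of 0]) (use le in simp)
    have "prob (F n) \<le> (\<Sum>j. prob (Ev (Suc n) j))"
      unfolding F_def by (rule finite_measure_subadditive_countably) (use Ev_sets sE in auto)
    also have "\<dots> \<le> (\<Sum>j. (1/2::real)^(Suc n + j))" by (rule suminf_le[OF le sE geo])
    also have "\<dots> = (1/2)^(Suc n) * (\<Sum>j. (1/2::real)^j)"
    proof -
      have e: "(\<lambda>j. (1/2::real)^(Suc n + j)) = (\<lambda>j. (1/2)^(Suc n) * (1/2)^j)" by (simp only: power_add)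
      have s: "summable (\<lambda>j. (1/2::real)^j)" by (rule summable_geometric) simp
      show ?thesis unfolding e by (rule suminf_mult[OF s])
    qed
    also have "\<dots> = (1/2)^n" by (simp add: suminf_geometric)
    finally show ?thesis .
  qed
  have summ: "summable (\<lambda>n. prob (F n))"
    by (rule summable_comparison_test'[of "\<lambda>n. (1/2::real)^n" 0]) (use F_prob in auto)
  have BC: "AE \<omega> in M. eventually (\<lambda>n. \<omega> \<in> space M - F n) sequentially"
    by (rule borel_cantelli_AE1) (use F_sets summ in \<open>auto simp: less_top[symmetric]\<close>)
  show ?thesis
  proof (intro exI[of _ "3 * L"] conjI)
    show "3 * L > 0" using L1 by simp
    show "AE \<omega> in M. \<exists>N\<ge>1. \<forall>n\<ge>N. \<forall>j::nat. \<forall>C. finite C \<and> strict_chain C \<and> C \<subseteq> P \<omega> \<and>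
      (\<forall>p\<in>C. (\<forall>i. -(real n * 4^j) < fst p$i \<and> fst p$i \<le> real n * 4^j) \<and> 0 < snd p \<and> snd p \<le> real n * T)
      \<longrightarrow> real (card C) \<le> 3 * L * real n * ((4::real)^j) powr (real CARD('d) / (real CARD('d) + 1))"
      using BC
    proof eventually_elim
      case (elim \<omega>)
      then obtain N0 where N0: "\<And>n. n \<ge> N0 \<Longrightarrow> \<omega> \<in> space M - F n"
        by (auto simp: eventually_sequentially)
      have \<omega>: "\<omega> \<in> space M" using N0[of N0] by auto
      show ?case
      proof (intro exI[of _ "Suc N0"] conjI allI impI)
        fix n j C
        assume n: "Suc N0 \<le> n"
        assume C: "finite C \<and> strict_chain C \<and> C \<subseteq> P \<omega> \<and>
          (\<forall>p\<in>C. (\<forall>i. -(real n * 4^j) < fst p$i \<and> fst p$i \<le> real n * 4^j) \<and> 0 < snd p \<and> snd p \<le> real n * T)"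
        have n1: "n \<ge> 1" using n by simp
        obtain n' where n': "n = Suc n'" "n' \<ge> N0" using n by (cases n) auto
        have notE: "\<omega> \<notin> Ev n j" using N0[OF n'(2)] unfolding F_def n'(1) by auto
        define r where "r = rr n j"
        have r0: "real r > 0" using rpos[OF n1, of j] by (simp add: r_def)
        have rh: "real r * hh n j = 2 * (real n * 4^j)" using r0 by (simp add: hh_def r_def)
        have rt: "real r * tt n j = real n * T" using r0 by (simp add: tt_def r_def)
        have CQ: "C \<subseteq> Qbox (lov n j) (hh n j) (tt n j) r"
        proof
          fix p assume p: "p \<in> C"
          then have "(\<forall>i. -(real n * 4^j) < fst p$i \<and> fst p$i \<le> real n * 4^j) \<and> 0 < snd p \<and> snd p \<le> real n * T"
            using C by blast
          then show "p \<in> Qbox (lov n j) (hh n j) (tt n j) r"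
            unfolding Qbox_def lov_def using rh rt by auto
        qed
        obtain w where w: "w \<in> W r" and Cw: "C \<subseteq> cellU (lov n j) (hh n j) (tt n j) w"
          using cover[OF hpos[OF n1] _ _ CQ] C unfolding W_def cellU_def by blast
        have "\<omega> \<notin> G n j w" using notE w unfolding Ev_def r_def by blast
        then have lt: "card (P \<omega> \<inter> cellU (lov n j) (hh n j) (tt n j) w) < mm n j"
          using \<omega> unfolding G_def by auto
        have fin: "finite (P \<omega> \<inter> cellU (lov n j) (hh n j) (tt n j) w)"
        proof -
          have "\<forall>\<omega>\<in>space M. P \<omega> \<subseteq> UNIV \<times> {0<..} \<and> (\<forall>A. bounded A \<longrightarrow> finite (P \<omega> \<inter> A))"
            using PP unfolding poisson_pp_def by (rule conjunct1)
          then show ?thesis using \<omega> cellU_props(2)[OF hpos[OF n1], where lo="lov n j" and w=w] by blast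
        qed
        have "card C \<le> card (P \<omega> \<inter> cellU (lov n j) (hh n j) (tt n j) w)"
          by (rule card_mono[OF fin]) (use C Cw in auto)
        with lt have "card C < nat \<lceil>L * real r\<rceil>" by (simp add: mm_def r_def)
        then have "real (card C) < L * real r" by (rule lt_nat_ceiling)
        also have "\<dots> \<le> L * (3 * real n * ((4::real)^j) powr \<theta>)"
          using rle[OF n1, of j] L1 by (simp add: r_def)
        finally show "real (card C) \<le> 3 * L * real n * ((4::real)^j) powr (real CARD('d) / (real CARD('d) + 1))"
          by (simp add: \<theta>_def D_def mult_ac)
      qed simp
    qed
  qed
qed



lemma supnorm_ge: "\<bar>y$i\<bar> \<le> supnorm y"
  unfolding supnorm_def by (rule Max_ge) auto

lemma supnorm_nonneg: "0 \<le> supnorm y"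
  using supnorm_ge[of y undefined] by linarith

lemma lpp_H_nonneg: "0 \<le> lpp_H Pw y x t"
  unfolding lpp_H_def by (rule SUP_upper2[of "{}"]) (auto simp: strict_chain_def)

lemma ereal_div_gt: "(n::real) > 0 \<Longrightarrow> ereal c < z / ereal n \<Longrightarrow> ereal (n * c) < z"
  by (cases z) (auto simp: field_simps)

lemma pick_j: "(s::real) \<ge> 1 \<Longrightarrow> \<exists>j::nat. s \<le> 4^j \<and> (4::real)^j \<le> 4 * s"
proof -
  assume s: "s \<ge> 1"
  obtain k :: nat where "s < 4^k" using real_arch_pow[of 4 s] by auto
  then have ex: "\<exists>k::nat. s \<le> 4^k" by (auto intro: less_imp_le)
  define j where "j = (LEAST k::nat. s \<le> 4^k)"
  have j: "s \<le> 4^j" unfolding j_def by (rule LeastI_ex[OF ex])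
  have "(4::real)^j \<le> 4 * s"
  proof (cases j)
    case 0 then show ?thesis using s by simp
  next
    case (Suc k)
    then have "\<not> s \<le> 4^k" using not_less_Least[of k "\<lambda>k. s \<le> 4^k"] unfolding j_def by simp
    then show ?thesis using Suc by simp
  qed
  then show ?thesis using j by blast
qed

lemma H_bound:
  fixes Pw :: "((real^'d) \<times> real) set" and y x :: "real^'d"
  assumes Hb: "\<forall>j::nat. \<forall>C. finite C \<and> strict_chain C \<and> C \<subseteq> Pw \<and>
      (\<forall>p\<in>C. (\<forall>i. -(real n * 4^j) < fst p$i \<and> fst p$i \<le> real n * 4^j) \<and> 0 < snd p \<and> snd p \<le> real n * T)
      \<longrightarrow> real (card C) \<le> \<Lambda> * real n * ((4::real)^j) powr \<theta>"
    and L: "\<Lambda> > 0" and n: "n \<ge> 1" and th: "0 \<le> \<theta>" "\<theta> \<le> 1" and t: "t \<le> T"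
    and x: "\<forall>i. x$i \<le> B" and B: "B \<ge> 0" and Y: "Y \<ge> 1" "Y \<ge> B" and y: "\<forall>i. -Y \<le> y$i"
  shows "lpp_H Pw (real n *\<^sub>R y) (real n *\<^sub>R x) (real n * t) \<le> ereal (8 * \<Lambda> * real n * Y powr \<theta>)"
proof -
  obtain j :: nat where j: "Y + B \<le> 4^j" "(4::real)^j \<le> 4 * (Y + B)" using pick_j[of "Y + B"] Y B by auto
  have Kb: "((4::real)^j) powr \<theta> \<le> 8 * Y powr \<theta>"
  proof -
    have "((4::real)^j) powr \<theta> \<le> (8 * Y) powr \<theta>" by (rule powr_mono2) (use th j Y in auto)
    also have "\<dots> = 8 powr \<theta> * Y powr \<theta>" using Y by (simp add: powr_mult)
    also have "\<dots> \<le> 8 * Y powr \<theta>"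
    proof (rule mult_right_mono)
      have "(8::real) powr \<theta> \<le> 8 powr 1" by (rule powr_mono) (use th in auto)
      then show "(8::real) powr \<theta> \<le> 8" by simp
    qed simp
    finally show ?thesis .
  qed
  show ?thesis
    unfolding lpp_H_def
  proof (rule SUP_least)
    fix C assume C: "C \<in> {C. finite C \<and> strict_chain C \<and> C \<subseteq> Pw \<inter> {(\<eta>, s). vless (real n *\<^sub>R y) \<eta> \<and> \<eta> \<le> real n *\<^sub>R x \<and> 0 < s \<and> s \<le> real n * t}}"
    have "\<forall>p\<in>C. (\<forall>i. -(real n * 4^j) < fst p$i \<and> fst p$i \<le> real n * 4^j) \<and> 0 < snd p \<and> snd p \<le> real n * T"
    proof
      fix p assume p: "p \<in> C"
      then have pp: "vless (real n *\<^sub>R y) (fst p)" "fst p \<le> real n *\<^sub>R x" "0 < snd p" "snd p \<le> real n * t"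
        using C by auto
      have "-(real n * 4^j) < fst p$i \<and> fst p$i \<le> real n * 4^j" for i
      proof
        have "-(real n * 4^j) \<le> real n * y$i"
        proof -
          have "-(4^j) \<le> y$i" using y j B by (smt (verit))
          then have "real n * (-(4^j)) \<le> real n * y$i" by (rule mult_left_mono) simp
          then show ?thesis by simp
        qed
        also have "\<dots> < fst p$i" using pp(1) by (simp add: vless_def)
        finally show "-(real n * 4^j) < fst p$i" .
        have "fst p$i \<le> real n * x$i" using pp(2) by (simp add: less_eq_vec_def)
        also have "\<dots> \<le> real n * 4^j" by (rule mult_left_mono) (use x j Y B in \<open>auto intro: order_trans\<close>)
        finally show "fst p$i \<le> real n * 4^j" .
      qed
      moreover have "snd p \<le> real n * T" using pp(4) t by (smt (verit) mult_left_mono of_nat_0_le_iff)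
      ultimately show "(\<forall>i. -(real n * 4^j) < fst p$i \<and> fst p$i \<le> real n * 4^j) \<and> 0 < snd p \<and> snd p \<le> real n * T"
        using pp(3) by blast
    qed
    then have "real (card C) \<le> \<Lambda> * real n * ((4::real)^j) powr \<theta>" using Hb C by blast
    also have "\<dots> \<le> \<Lambda> * real n * (8 * Y powr \<theta>)" by (rule mult_left_mono[OF Kb]) (use L in simp)
    finally show "ereal (real (card C)) \<le> ereal (8 * \<Lambda> * real n * Y powr \<theta>)" by (simp add: mult_ac)
  qed
qed



theorem lemma8p1:
  fixes M :: "'w measure"
    and P :: "'w \<Rightarrow> ((real^'d) \<times> real) set"
    and sig0 :: "nat \<Rightarrow> 'w \<Rightarrow> real^'d \<Rightarrow> ereal"
    and u0 :: "real^'d \<Rightarrow> real"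
    and T :: real and b :: "real^'d"
  assumes "prob_space M"
    and "CARD('d) \<ge> 2"
    and "poisson_pp M P"
    and "\<forall>n. \<forall>\<omega>\<in>space M. sig0 n \<omega> \<in> state_space"
    and "mono u0" and "locally_lipschitz u0"
    and "\<forall>b'. ((\<lambda>K::real. SUP y \<in> {y. y \<le> b' \<and> supnorm y \<ge> K}.
              ereal (supnorm y powr (- real CARD('d) / (real CARD('d) + 1)) * u0 y))
           \<longlongrightarrow> -\<infinity>) at_top"
    and hyp12: "\<forall>y. AE \<omega> in M.
          (\<lambda>n. sig0 n \<omega> (real n *\<^sub>R y) / ereal (real n)) \<longlonglongrightarrow> ereal (u0 y)"
    and hyp13: "\<forall>b' (C::real). C > 0 \<longrightarrow> (AE \<omega> in M. \<exists>K>0. \<exists>N::nat. N > 0 \<and>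
          (\<forall>n\<ge>N. \<forall>y. y \<le> b' \<and> supnorm y \<ge> K \<longrightarrow>
             sig0 n \<omega> (real n *\<^sub>R y) \<le> ereal (- C * real n * supnorm y powr (real CARD('d) / (real CARD('d) + 1)))))"
    and "T > 0" and "vless 0 b"
  shows "AE \<omega> in M. \<exists>N::nat. \<exists>a::real^'d. \<forall>x\<in>{-b..b}. \<forall>t\<in>{0<..T}. \<forall>n\<ge>N.
           lpp_evolve (P \<omega>) (sig0 n \<omega>) (real n *\<^sub>R x) (real n * t)
         = (SUP y \<in> {a..x}. sig0 n \<omega> (real n *\<^sub>R y) + lpp_H (P \<omega>) (real n *\<^sub>R y) (real n *\<^sub>R x) (real n * t))"
proof -
  have M: "prob_space M" and PP: "poisson_pp M P" and T: "T > 0" and b0: "vless 0 b"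
    using assms by auto
  interpret prob_space M by (rule M)
  define \<theta> where "\<theta> = real CARD('d) / (real CARD('d) + 1)"
  have th: "0 \<le> \<theta>" "\<theta> \<le> 1" "\<theta> \<ge> 1/2"
    by (auto simp: \<theta>_def field_simps Suc_leI)
  obtain \<Lambda> where L: "\<Lambda> > 0" and HAE: "AE \<omega> in M. \<exists>N\<ge>1. \<forall>n\<ge>N. \<forall>j::nat. \<forall>C. finite C \<and> strict_chain C \<and> C \<subseteq> P \<omega> \<and>
      (\<forall>p\<in>C. (\<forall>i. -(real n * 4^j) < fst p$i \<and> fst p$i \<le> real n * 4^j) \<and> 0 < snd p \<and> snd p \<le> real n * T)
      \<longrightarrow> real (card C) \<le> \<Lambda> * real n * ((4::real)^j) powr \<theta>"
    using H_AE[OF M PP T] unfolding \<theta>_def by blast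
  define B where "B = supnorm b"
  have bB: "b$i \<le> B" for i using supnorm_ge[of b i] by (simp add: B_def)
  have bpos: "b$i > 0" for i using b0 by (simp add: vless_def)
  have B0: "B \<ge> 0" using bB[of undefined] bpos[of undefined] by linarith
  define c0 :: "real^'d" where "c0 = (\<chi> i. -(B+1))"
  define u where "u = u0 c0"
  define C13 where "C13 = 8 * \<Lambda> + 1"
  have C13: "C13 > 0" using L by (simp add: C13_def)
  have A12: "AE \<omega> in M. (\<lambda>n. sig0 n \<omega> (real n *\<^sub>R c0) / ereal (real n)) \<longlonglongrightarrow> ereal u"
    using hyp12 by (simp add: u_def)
  have A13: "AE \<omega> in M. \<exists>K>0. \<exists>N::nat. N > 0 \<and>
          (\<forall>n\<ge>N. \<forall>y. y \<le> b \<and> supnorm y \<ge> K \<longrightarrow>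
             sig0 n \<omega> (real n *\<^sub>R y) \<le> ereal (- C13 * real n * supnorm y powr \<theta>))"
    using hyp13 C13 unfolding \<theta>_def by blast
  show ?thesis using HAE A12 A13
  proof eventually_elim
    case (elim \<omega>)
    obtain NH where NH: "NH \<ge> 1" "\<forall>n\<ge>NH. \<forall>j::nat. \<forall>C. finite C \<and> strict_chain C \<and> C \<subseteq> P \<omega> \<and>
      (\<forall>p\<in>C. (\<forall>i. -(real n * 4^j) < fst p$i \<and> fst p$i \<le> real n * 4^j) \<and> 0 < snd p \<and> snd p \<le> real n * T)
      \<longrightarrow> real (card C) \<le> \<Lambda> * real n * ((4::real)^j) powr \<theta>"
      using elim(1) by blast
    obtain K13 N13 where K13: "K13 > 0" and N13: "\<forall>n\<ge>N13. \<forall>y. y \<le> b \<and> supnorm y \<ge> K13 \<longrightarrow>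
             sig0 n \<omega> (real n *\<^sub>R y) \<le> ereal (- C13 * real n * supnorm y powr \<theta>)"
      using elim(3) by blast
    have "eventually (\<lambda>n. ereal (u - 1) < sig0 n \<omega> (real n *\<^sub>R c0) / ereal (real n)) sequentially"
      by (rule order_tendstoD(1)[OF elim(2)]) simp
    then obtain N12 where N12: "\<And>n. n \<ge> N12 \<Longrightarrow> ereal (u - 1) < sig0 n \<omega> (real n *\<^sub>R c0) / ereal (real n)"
      by (auto simp: eventually_sequentially)
    define A where "A = max K13 (max (B+1) ((1 + \<bar>u\<bar>)^2))"
    have A: "A \<ge> K13" "A \<ge> B + 1" "A \<ge> (1 + \<bar>u\<bar>)^2" by (auto simp: A_def)
    define a :: "real^'d" where "a = (\<chi> i. -A)"
    define N where "N = max NH (max N13 N12)"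
    show ?case
    proof (intro exI[of _ N] exI[of _ a] ballI allI impI)
      fix x t n assume x: "x \<in> {-b..b}" and t: "t \<in> {0<..T}" and n: "N \<le> n"
      have n1: "n \<ge> 1" and nH: "n \<ge> NH" and n13: "n \<ge> N13" and n12: "n \<ge> N12"
        using n NH(1) by (auto simp: N_def)
      have npos: "real n > 0" using n1 by simp
      have xb: "-b$i \<le> x$i" "x$i \<le> b$i" for i using x by (auto simp: less_eq_vec_def)
      define RHS where "RHS = (SUP y \<in> {a..x}. sig0 n \<omega> (real n *\<^sub>R y) + lpp_H (P \<omega>) (real n *\<^sub>R y) (real n *\<^sub>R x) (real n * t))"
      have c0mem: "c0 \<in> {a..x}"
      proof -
        have "a \<le> c0" using A by (auto simp: less_eq_vec_def a_def c0_def)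
        moreover have "c0 \<le> x" using xb bB by (auto simp: less_eq_vec_def c0_def intro: order_trans)
          (smt (verit) bB xb)
        ultimately show ?thesis by simp
      qed
      have low: "ereal (real n * (u - 1)) < sig0 n \<omega> (real n *\<^sub>R c0)"
        by (rule ereal_div_gt[OF npos N12[OF n12]])
      have RHS_ge: "sig0 n \<omega> (real n *\<^sub>R c0) \<le> RHS"
      proof -
        have "sig0 n \<omega> (real n *\<^sub>R c0) + 0 \<le> sig0 n \<omega> (real n *\<^sub>R c0) + lpp_H (P \<omega>) (real n *\<^sub>R c0) (real n *\<^sub>R x) (real n * t)"
          by (rule add_left_mono[OF lpp_H_nonneg])
        also have "\<dots> \<le> RHS" unfolding RHS_def by (rule SUP_upper[OF c0mem])
        finally show ?thesis by simp
      qed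
      show "lpp_evolve (P \<omega>) (sig0 n \<omega>) (real n *\<^sub>R x) (real n * t) = RHS"
      proof (rule antisym)
        show "lpp_evolve (P \<omega>) (sig0 n \<omega>) (real n *\<^sub>R x) (real n * t) \<le> RHS"
          unfolding lpp_evolve_def
        proof (rule SUP_least)
          fix z assume z: "z \<in> {z. z \<le> real n *\<^sub>R x}"
          define y where "y = (1 / real n) *\<^sub>R z"
          have zy: "real n *\<^sub>R y = z" using npos by (simp add: y_def)
          have yx: "y \<le> x"
          proof -
            have "z$i \<le> real n * x$i" for i using z by (auto simp: less_eq_vec_def)
            then have "z$i / real n \<le> x$i" for i using npos by (simp add: divide_le_eq mult.commute)
            then show ?thesis by (simp add: less_eq_vec_def y_def)
          qed
          show "sig0 n \<omega> z + lpp_H (P \<omega>) z (real n *\<^sub>R x) (real n * t) \<le> RHS"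
          proof (cases "a \<le> y")
            case True
            then have "y \<in> {a..x}" using yx by simp
            then have "sig0 n \<omega> (real n *\<^sub>R y) + lpp_H (P \<omega>) (real n *\<^sub>R y) (real n *\<^sub>R x) (real n * t) \<le> RHS"
              unfolding RHS_def by (rule SUP_upper)
            then show ?thesis using zy by simp
          next
            case False
            then obtain i where yi: "y$i < -A" by (auto simp: a_def less_eq_vec_def not_le)
            define Y where "Y = supnorm y"
            have YA: "Y > A" using supnorm_ge[of y i] yi by (simp add: Y_def)
            have Yge: "Y \<ge> 1" "Y \<ge> B" "Y \<ge> K13" using YA A B0 by auto
            have yY: "\<forall>i. -Y \<le> y$i"
            proof
              fix i show "-Y \<le> y$i" using supnorm_ge[of y i] unfolding Y_def by linarith
            qed
            have yb: "y \<le> b" using yx xb by (auto simp: less_eq_vec_def intro: order_trans)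
            have sig: "sig0 n \<omega> z \<le> ereal (- C13 * real n * Y powr \<theta>)"
              using N13 n13 yb Yge(3) zy by (auto simp: Y_def)
            have H: "lpp_H (P \<omega>) z (real n *\<^sub>R x) (real n * t) \<le> ereal (8 * \<Lambda> * real n * Y powr \<theta>)"
            proof -
              have Hn: "\<forall>j::nat. \<forall>C. finite C \<and> strict_chain C \<and> C \<subseteq> P \<omega> \<and>
                (\<forall>p\<in>C. (\<forall>i. -(real n * 4^j) < fst p$i \<and> fst p$i \<le> real n * 4^j) \<and> 0 < snd p \<and> snd p \<le> real n * T)
                \<longrightarrow> real (card C) \<le> \<Lambda> * real n * ((4::real)^j) powr \<theta>"
                using NH(2) nH by blast
              have "lpp_H (P \<omega>) (real n *\<^sub>R y) (real n *\<^sub>R x) (real n * t) \<le> ereal (8 * \<Lambda> * real n * Y powr \<theta>)"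
                by (rule H_bound[OF Hn L n1 th(1,2), where B=B])
                   (use t xb bB B0 Yge yY in \<open>auto intro: order_trans\<close>)
              then show ?thesis using zy by simp
            qed
            have "sig0 n \<omega> z + lpp_H (P \<omega>) z (real n *\<^sub>R x) (real n * t)
                \<le> ereal (- C13 * real n * Y powr \<theta>) + ereal (8 * \<Lambda> * real n * Y powr \<theta>)"
              by (rule add_mono[OF sig H])
            also have "\<dots> = ereal (- (real n * Y powr \<theta>))" by (simp add: C13_def algebra_simps)
            also have "\<dots> \<le> ereal (real n * (u - 1))"
            proof -
              have "Y powr (1/2) \<le> Y powr \<theta>" by (rule powr_mono) (use th Yge in auto)
              moreover have "Y powr (1/2) = sqrt Y" using Yge by (simp add: powr_half_sqrt)
              moreover have "sqrt ((1 + \<bar>u\<bar>)^2) \<le> sqrt Y" using A YA by (simp del: real_sqrt_abs)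
              moreover have "sqrt ((1 + \<bar>u\<bar>)^2) = 1 + \<bar>u\<bar>" by simp
              ultimately have "Y powr \<theta> \<ge> 1 - u" by linarith
              then have "real n * (1 - u) \<le> real n * Y powr \<theta>" by (rule mult_left_mono) simp
              then show ?thesis by (simp add: algebra_simps)
            qed
            also have "\<dots> \<le> sig0 n \<omega> (real n *\<^sub>R c0)" using low by simp
            also have "\<dots> \<le> RHS" by (rule RHS_ge)
            finally show ?thesis .
          qed
        qed
        show "RHS \<le> lpp_evolve (P \<omega>) (sig0 n \<omega>) (real n *\<^sub>R x) (real n * t)"
          unfolding lpp_evolve_def RHS_def
        proof (rule SUP_least)
          fix y assume y: "y \<in> {a..x}"
          have "real n *\<^sub>R y \<le> real n *\<^sub>R x"
            using y npos by (auto simp: less_eq_vec_def intro: mult_left_mono)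
          then show "sig0 n \<omega> (real n *\<^sub>R y) + lpp_H (P \<omega>) (real n *\<^sub>R y) (real n *\<^sub>R x) (real n * t)
              \<le> (SUP z\<in>{z. z \<le> real n *\<^sub>R x}. sig0 n \<omega> z + lpp_H (P \<omega>) z (real n *\<^sub>R x) (real n * t))"
            by (intro SUP_upper) simp
        qed
      qed
    qed
  qed
qed


end
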